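(* Let $C\in\mathbb{R}^{n\times n}$ be symmetric, $\alpha>0$ and $\rho\ge\alpha\|C\|_\infty$, $\rho>0$. Let $(\tilde\sigma^k,\sigma^k,y^k)$ be generated by the ADMM-BM algorithm described in the context, with Assumption A holding. Then $\|\gamma_i^k\|\ge 1-\frac4\alpha-\frac2{\alpha^2}$ for all $i\in[n]$ and all $k\ge2$.
   Context: $\|C\|_\infty=\max_i\sum_j|C_{ij}|$. For $\sigma\in\mathbb{R}^{n\times r}$, $\sigma_i$ is its $i$-th row; $\mathcal{M}=\{\sigma\in\mathbb{R}^{n\times r}:\|\sigma_i\|=1\ \forall i\}$. ADMM-BM with parameter $\rho$: choose $\tilde\sigma^0\in\mathcal{M}$, $\sigma^0=\tilde\sigma^0$, $y^0=C\tilde\sigma^0$. For $k=0,1,\dots$: $\gamma^k=\sigma^k-\frac1\rho(y^k+C\sigma^k)$ with rows $\gamma_i^k$; $\tilde\sigma^{k+1}_i=\gamma_i^k/\|\gamma_i^k\|$; $\sigma^{k+1}=\tilde\sigma^{k+1}+\frac1\rho(y^k-C\tilde\sigma^{k+1})$; $y^{k+1}=y^k+\rho(\tilde\sigma^{k+1}-\sigma^{k+1})$. Assumption A: $\gamma_i^k\neq0$ for all $i,k$ (so the iterates are well defined). *)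

theory Defs
  imports "HOL-Analysis.Analysis"
begin

text \<open>Matrices: C :: real^'n^'n (n x n), sigma, y :: real^'r^'n (n x r); row i of sigma is sigma $ i.\<close>

definition inf_norm :: "real^'n^'m \<Rightarrow> real" where
  "inf_norm C = Max (range (\<lambda>i. \<Sum>j\<in>UNIV. \<bar>C $ i $ j\<bar>))"

definition on_M :: "real^'r^'n \<Rightarrow> bool" where
  "on_M \<sigma> \<longleftrightarrow> (\<forall>i. norm (\<sigma> $ i) = 1)"

definition admm_gamma :: "real^'n^'n \<Rightarrow> real \<Rightarrow> real^'r^'n \<Rightarrow> real^'r^'n \<Rightarrow> real^'r^'n" where
  "admm_gamma C \<rho> \<sigma> y = \<sigma> - (1/\<rho>) *\<^sub>R (y + C ** \<sigma>)"

definition row_normalize :: "real^'r^'n \<Rightarrow> real^'r^'n" where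
  "row_normalize g = (\<chi> i. (1 / norm (g $ i)) *\<^sub>R (g $ i))"

fun admm_bm :: "real^'n^'n \<Rightarrow> real \<Rightarrow> real^'r^'n \<Rightarrow> nat \<Rightarrow> (real^'r^'n) \<times> (real^'r^'n) \<times> (real^'r^'n)" where
  "admm_bm C \<rho> \<sigma>0 0 = (\<sigma>0, \<sigma>0, C ** \<sigma>0)"
| "admm_bm C \<rho> \<sigma>0 (Suc k) =
     (let (st, s, y) = admm_bm C \<rho> \<sigma>0 k;
          st' = row_normalize (admm_gamma C \<rho> s y);
          s' = st' + (1/\<rho>) *\<^sub>R (y - C ** st');
          y' = y + \<rho> *\<^sub>R (st' - s')
      in (st', s', y'))"

definition admm_sigma_t where "admm_sigma_t C \<rho> \<sigma>0 k = fst (admm_bm C \<rho> \<sigma>0 k)"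
definition admm_sigma where "admm_sigma C \<rho> \<sigma>0 k = fst (snd (admm_bm C \<rho> \<sigma>0 k))"
definition admm_y where "admm_y C \<rho> \<sigma>0 k = snd (snd (admm_bm C \<rho> \<sigma>0 k))"

definition admm_gamma_k where
  "admm_gamma_k C \<rho> \<sigma>0 k = admm_gamma C \<rho> (admm_sigma C \<rho> \<sigma>0 k) (admm_y C \<rho> \<sigma>0 k)"

end

theory Submission
  imports Defs
begin

lemma mm_row: "(C ** v) $ i = (\<Sum>j\<in>UNIV. (C $ i $ j) *\<^sub>R (v $ j))"
  for C :: "real^'n^'m" and v :: "real^'r^'n"
  by (simp add: vec_eq_iff matrix_matrix_mult_def sum_component)

lemma mm_sub: "C ** (a - b) = C ** a - C ** (b :: real^'r^'n)" for C :: "real^'n^'m"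
  by (simp add: vec_eq_iff matrix_matrix_mult_def sum_subtractf algebra_simps)

lemma mm_scale: "C ** (c *\<^sub>R b) = c *\<^sub>R (C ** (b :: real^'r^'n))" for C :: "real^'n^'m"
  by (simp add: vec_eq_iff matrix_matrix_mult_def sum_distrib_left algebra_simps)

lemma row_le_inf: "(\<Sum>j\<in>UNIV. \<bar>C $ i $ j\<bar>) \<le> inf_norm C" for C :: "real^'n^'m"
  unfolding inf_norm_def by (rule Max_ge) auto

lemma inf_norm_nonneg: "0 \<le> inf_norm C" for C :: "real^'n^'m"
  by (rule order_trans[OF _ row_le_inf]) (auto intro: sum_nonneg)

lemma mm_bound:
  fixes C :: "real^'n^'m" and v :: "real^'r^'n"
  assumes "\<And>j. norm (v $ j) \<le> M"
  shows "norm ((C ** v) $ i) \<le> inf_norm C * M"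
proof -
  have "norm ((C ** v) $ i) \<le> (\<Sum>j\<in>UNIV. norm ((C $ i $ j) *\<^sub>R (v $ j)))"
    unfolding mm_row by (rule norm_sum)
  also have "\<dots> \<le> (\<Sum>j\<in>UNIV. \<bar>C $ i $ j\<bar> * M)"
    by (rule sum_mono) (simp add: assms mult_left_mono)
  also have "\<dots> = (\<Sum>j\<in>UNIV. \<bar>C $ i $ j\<bar>) * M" by (simp add: sum_distrib_right)
  also have "\<dots> \<le> inf_norm C * M"
  proof -
    have "0 \<le> M" using assms[of undefined] norm_ge_zero by (rule order_trans[rotated])
    then show ?thesis by (simp add: mult_right_mono row_le_inf)
  qed
  finally show ?thesis .
qed

lemma step_eqs:
  "admm_sigma_t C \<rho> \<sigma>0 (Suc k) = row_normalize (admm_gamma_k C \<rho> \<sigma>0 k)"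
  "admm_sigma C \<rho> \<sigma>0 (Suc k) = admm_sigma_t C \<rho> \<sigma>0 (Suc k) + (1/\<rho>) *\<^sub>R (admm_y C \<rho> \<sigma>0 k - C ** admm_sigma_t C \<rho> \<sigma>0 (Suc k))"
  "admm_y C \<rho> \<sigma>0 (Suc k) = admm_y C \<rho> \<sigma>0 k + \<rho> *\<^sub>R (admm_sigma_t C \<rho> \<sigma>0 (Suc k) - admm_sigma C \<rho> \<sigma>0 (Suc k))"
  by (simp_all add: admm_sigma_t_def admm_sigma_def admm_y_def admm_gamma_k_def Let_def split: prod.splits)

lemma y_eq:
  assumes "\<rho> \<noteq> 0"
  shows "admm_y C \<rho> \<sigma>0 k = C ** admm_sigma_t C \<rho> \<sigma>0 k"
proof (cases k)
  case 0 then show ?thesis by (simp add: admm_y_def admm_sigma_t_def)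
next
  case (Suc m)
  show ?thesis unfolding Suc step_eqs(3) step_eqs(2)[of C \<rho> \<sigma>0 m]
    using assms by (simp add: algebra_simps)
qed

theorem lemma2:
  fixes C :: "real^'n^'n" and \<sigma>0 :: "real^'r^'n" and \<alpha> \<rho> :: real
  assumes "transpose C = C"
    and "\<alpha> > 0" and "\<rho> \<ge> \<alpha> * inf_norm C" and "\<rho> > 0"
    and "on_M \<sigma>0"
    and "\<forall>k i. admm_gamma_k C \<rho> \<sigma>0 k $ i \<noteq> 0"
  shows "\<forall>k\<ge>2. \<forall>i. norm (admm_gamma_k C \<rho> \<sigma>0 k $ i) \<ge> 1 - 4/\<alpha> - 2/\<alpha>^2"
proof (intro allI impI)
  fix k :: nat and i
  assume "k \<ge> 2"
  then obtain m where k: "k = Suc m" by (cases k) auto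
  let ?st = "admm_sigma_t C \<rho> \<sigma>0"
  have unit: "norm (?st j $ l) = 1" for j l
  proof (cases j)
    case 0 then show ?thesis using assms(5) by (simp add: on_M_def admm_sigma_t_def)
  next
    case (Suc j')
    show ?thesis using assms(6) unfolding Suc step_eqs(1) row_normalize_def by simp
  qed
  have rho0: "\<rho> \<noteq> 0" using assms(4) by simp
  define a where "a = 1/\<rho>"
  define p where "p = ?st m"
  define s where "s = ?st k"
  define N where "N = inf_norm C"
  have N0: "0 \<le> N" unfolding N_def by (rule inf_norm_nonneg)
  have a0: "0 \<le> a" using assms(4) by (simp add: a_def)
  have aN: "a * N \<le> 1/\<alpha>"
    using assms(2,3,4) by (simp add: a_def N_def field_simps mult.commute)
  have sig: "admm_sigma C \<rho> \<sigma>0 k = s + a *\<^sub>R (C ** p - C ** s)"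
    unfolding k step_eqs(2) using assms(4) by (simp add: y_eq a_def s_def p_def k)
  have gam: "admm_gamma_k C \<rho> \<sigma>0 k = s + a *\<^sub>R (C ** p) - (3 * a) *\<^sub>R (C ** s)
      - (a * a) *\<^sub>R (C ** (C ** (p - s)))"
    unfolding admm_gamma_k_def admm_gamma_def sig y_eq[OF rho0]
    by (simp add: a_def[symmetric] s_def[symmetric] matrix_add_ldistrib mm_sub mm_scale algebra_simps)
      (simp add: vec_eq_iff algebra_simps)
  show "norm (admm_gamma_k C \<rho> \<sigma>0 k $ i) \<ge> 1 - 4/\<alpha> - 2/\<alpha>^2"
  proof -
    have b1: "norm ((C ** p) $ i) \<le> N" using mm_bound[of p 1 C i] unit by (simp add: p_def N_def)
    have b2: "norm ((C ** s) $ i) \<le> N" using mm_bound[of s 1 C i] unit by (simp add: s_def N_def)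
    have "norm ((p - s) $ j) \<le> 2" for j
      using norm_triangle_ineq4[of "p $ j" "s $ j"] unit by (simp add: p_def s_def)
    then have "norm ((C ** (p - s)) $ j) \<le> N * 2" for j using mm_bound unfolding N_def by blast
    then have b3: "norm ((C ** (C ** (p - s))) $ i) \<le> N * (N * 2)" using mm_bound unfolding N_def by blast
    have n1: "norm (s $ i) = 1" using unit by (simp add: s_def)
    let ?A = "a *\<^sub>R (C ** p) $ i" and ?B = "(3 * a) *\<^sub>R (C ** s) $ i"
      and ?D = "(a * a) *\<^sub>R (C ** (C ** (p - s))) $ i"
    have eq: "admm_gamma_k C \<rho> \<sigma>0 k $ i = s $ i + ?A - ?B - ?D" by (simp add: gam)
    have "norm (s $ i) \<le> norm (s $ i + ?A - ?B - ?D) + norm ?A + norm ?B + norm ?D"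
      by (smt (verit) norm_triangle_ineq4 norm_triangle_ineq norm_minus_commute
        diff_add_cancel add_diff_cancel)
    moreover have "norm ?A \<le> 1/\<alpha>" using a0 b1 aN
      by (simp add: order_trans[OF mult_left_mono[OF b1 a0] aN])
    moreover have "norm ?B \<le> 3/\<alpha>" using order_trans[OF mult_left_mono[OF b2 a0] aN] a0
      by simp
    moreover have "norm ?D \<le> 2/\<alpha>^2"
    proof -
      have "norm ?D \<le> (a*a) * (N * (N * 2))" using mult_left_mono[OF b3, of "a*a"] a0 by simp
      also have "\<dots> = 2 * ((a*N) * (a*N))" by (simp add: algebra_simps)
      also have "\<dots> \<le> 2 * ((1/\<alpha>) * (1/\<alpha>))"
        using mult_mono[OF aN aN] a0 N0 assms(2) by simp
      finally show ?thesis by (simp add: power2_eq_square)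
    qed
    ultimately show ?thesis using eq n1 by simp
  qed
qed

end
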